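(* For $n\geq 1$ and $m\geq 1$, the forcing spectrum $\mathrm{Spec}(C(2m-1,2n+1))$ is an integer interval (i.e. it is continuous).
   Context: $C(k,n)$ denotes the graph with vertices $(a,b)$, $a\in\mathbb{Z}_n$, $0\le b\le k$, and edges $(a,b)(a+1,b)$ and $(a,b)(a,b+1)$ (the grid graph of a quadriculated cylinder with $k$ rows of $n$ squares). For a perfect matching $M$ of a graph $G$, a subset $S\subseteq M$ is a forcing set of $M$ if no other perfect matching of $G$ contains $S$; the forcing number $f(G,M)$ is the minimum size of a forcing set. The forcing spectrum $\mathrm{Spec}(G)$ is the set of forcing numbers of all perfect matchings of $G$; it is continuous if it is a set of consecutive integers. *)

theory Defs
  imports Main
begin

definition perfect_matching :: "'v set \<Rightarrow> 'v set set \<Rightarrow> 'v set set \<Rightarrow> bool" where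
  "perfect_matching V E M \<longleftrightarrow> M \<subseteq> E \<and> (\<forall>v\<in>V. \<exists>!e. e \<in> M \<and> v \<in> e)"

definition forcing_set :: "'v set \<Rightarrow> 'v set set \<Rightarrow> 'v set set \<Rightarrow> 'v set set \<Rightarrow> bool" where
  "forcing_set V E M S \<longleftrightarrow> S \<subseteq> M \<and>
     (\<forall>M'. perfect_matching V E M' \<and> S \<subseteq> M' \<longrightarrow> M' = M)"

definition forcing_number :: "'v set \<Rightarrow> 'v set set \<Rightarrow> 'v set set \<Rightarrow> nat" where
  "forcing_number V E M = (LEAST k. \<exists>S. forcing_set V E M S \<and> finite S \<and> card S = k)"

definition forcing_spectrum :: "'v set \<Rightarrow> 'v set set \<Rightarrow> nat set" where
  "forcing_spectrum V E = {forcing_number V E M | M. perfect_matching V E M}"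

definition continuous_spectrum :: "nat set \<Rightarrow> bool" where
  "continuous_spectrum A \<longleftrightarrow> (\<forall>i\<in>A. \<forall>j\<in>A. \<forall>x. i \<le> x \<and> x \<le> j \<longrightarrow> x \<in> A)"

text \<open>The cylinder grid C(k,n): vertices (a,b), a in Z_n (represented by 0..n-1), 0 <= b <= k.\<close>

definition cyl_verts :: "nat \<Rightarrow> nat \<Rightarrow> (nat \<times> nat) set" where
  "cyl_verts k n = {(a, b). a < n \<and> b \<le> k}"

definition cyl_edges :: "nat \<Rightarrow> nat \<Rightarrow> (nat \<times> nat) set set" where
  "cyl_edges k n =
     {{(a, b), ((a + 1) mod n, b)} | a b. a < n \<and> b \<le> k} \<union>
     {{(a, b), (a, b + 1)} | a b. a < n \<and> b < k}"

end

theory Submission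
  imports Defs
begin


lemma pm_unique:
  assumes "perfect_matching V E M" "v \<in> V" "e \<in> M" "e' \<in> M" "v \<in> e" "v \<in> e'"
  shows "e = e'"
  using assms unfolding perfect_matching_def by blast

lemma pm_exists:
  assumes "perfect_matching V E M" "v \<in> V"
  shows "\<exists>e\<in>M. v \<in> e"
  using assms unfolding perfect_matching_def by blast

lemma pm_sub: "perfect_matching V E M \<Longrightarrow> M \<subseteq> E"
  unfolding perfect_matching_def by blast

lemma swap4:
  assumes pm: "perfect_matching V E M"
    and m1: "e1 \<in> M" and m2: "e2 \<in> M"
    and d1: "e1 = {p1,p2}" and d2: "e2 = {p3,p4}" and d3: "e3 = {p2,p3}" and d4: "e4 = {p4,p1}"
    and E3: "e3 \<in> E" and E4: "e4 \<in> E"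
    and dist: "distinct [p1,p2,p3,p4]"
  shows "perfect_matching V E (M - {e1,e2} \<union> {e3,e4})"
  unfolding perfect_matching_def
proof (intro conjI ballI)
  show "M - {e1, e2} \<union> {e3, e4} \<subseteq> E" using pm_sub[OF pm] E3 E4 by blast
next
  fix v assume v: "v \<in> V"
  show "\<exists>!e. e \<in> M - {e1, e2} \<union> {e3, e4} \<and> v \<in> e"
  proof (cases "v \<in> {p1,p2,p3,p4}")
    case True
    have ex: "\<exists>e\<in>{e3,e4}. v \<in> e" using True d3 d4 by auto
    have un: "e = e'" if "e \<in> M - {e1, e2} \<union> {e3, e4}" "v \<in> e" "e' \<in> M - {e1, e2} \<union> {e3, e4}" "v \<in> e'" for e e'
    proof -
      have nM: "e \<in> {e3,e4}" if "e \<in> M - {e1, e2} \<union> {e3, e4}" "v \<in> e" for e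
      proof (rule ccontr)
        assume "e \<notin> {e3,e4}"
        then have eM: "e \<in> M" "e \<noteq> e1" "e \<noteq> e2" using that by auto
        have "v \<in> e1 \<or> v \<in> e2" using True d1 d2 by auto
        then show False using pm_unique[OF pm v] eM m1 m2 that(2) by metis
      qed
      have "e \<in> {e3,e4}" "e' \<in> {e3,e4}" using nM that by auto
      then show ?thesis using that dist d3 d4 by auto
    qed
    show ?thesis using ex un by blast
  next
    case False
    obtain e where e: "e \<in> M" "v \<in> e" using pm_exists[OF pm v] by blast
    have "e \<noteq> e1" "e \<noteq> e2" using False e d1 d2 by auto
    then have e': "e \<in> M - {e1, e2} \<union> {e3, e4}" using e by auto
    have U: "e2' = e" if "e2' \<in> M - {e1, e2} \<union> {e3, e4}" "v \<in> e2'" for e2'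
    proof -
      have "e2' \<notin> {e3,e4}" using False that(2) d3 d4 by auto
      then have "e2' \<in> M" using that by auto
      then show ?thesis using pm_unique[OF pm v] e that(2) by metis
    qed
    show ?thesis
    proof (rule ex1I[of _ e])
      show "e \<in> M - {e1, e2} \<union> {e3, e4} \<and> v \<in> e" using e' e(2) by simp
    next
      fix e2' assume "e2' \<in> M - {e1, e2} \<union> {e3, e4} \<and> v \<in> e2'"
      then show "e2' = e" using U by blast
    qed
  qed
qed

lemma forcing_self:
  assumes "perfect_matching V E M" "\<forall>e\<in>E. e \<noteq> {} \<and> e \<subseteq> V"
  shows "forcing_set V E M M"
  unfolding forcing_set_def
proof (intro conjI allI impI)
  fix M' assume a: "perfect_matching V E M' \<and> M \<subseteq> M'"
  show "M' = M"
  proof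
    show "M \<subseteq> M'" using a by blast
    show "M' \<subseteq> M"
    proof
      fix e assume e: "e \<in> M'"
      then have "e \<in> E" using a pm_sub by blast
      then obtain v where v: "v \<in> e" "v \<in> V" using assms(2) by blast
      obtain e' where e': "e' \<in> M" "v \<in> e'" using pm_exists[OF assms(1) v(2)] by blast
      have "e = e'" using pm_unique[of V E M' v e e'] a e e' v by blast
      then show "e \<in> M" using e' by simp
    qed
  qed
qed simp

lemma fn_wit:
  assumes "perfect_matching V E M" "\<forall>e\<in>E. e \<noteq> {} \<and> e \<subseteq> V" "finite E"
  shows "\<exists>S. forcing_set V E M S \<and> finite S \<and> card S = forcing_number V E M"
proof -
  have "finite M" using pm_sub[OF assms(1)] assms(3) by (rule finite_subset)
  then have "\<exists>S. forcing_set V E M S \<and> finite S \<and> card S = card M"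
    using forcing_self[OF assms(1,2)] by blast
  then have "\<exists>k. \<exists>S. forcing_set V E M S \<and> finite S \<and> card S = k" by blast
  then show ?thesis unfolding forcing_number_def by (rule LeastI_ex)
qed

lemma fn_le:
  assumes "forcing_set V E M S" "finite S"
  shows "forcing_number V E M \<le> card S"
  unfolding forcing_number_def using assms by (intro Least_le) blast

lemma twist_fn:
  assumes pm: "perfect_matching V E M"
    and EV: "\<forall>e\<in>E. e \<noteq> {} \<and> e \<subseteq> V" and fE: "finite E"
    and m1: "e1 \<in> M" and m2: "e2 \<in> M"
    and d1: "e1 = {p1,p2}" and d2: "e2 = {p3,p4}" and d3: "e3 = {p2,p3}" and d4: "e4 = {p4,p1}"
    and E3: "e3 \<in> E" and E4: "e4 \<in> E"
    and dist: "distinct [p1,p2,p3,p4]"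
  shows "forcing_number V E (M - {e1,e2} \<union> {e3,e4}) \<le> forcing_number V E M + 1"
proof -
  define M' where "M' = M - {e1,e2} \<union> {e3,e4}"
  have pm': "perfect_matching V E M'" unfolding M'_def by (rule swap4[OF assms(1,4-12)])
  have E1: "e1 \<in> E" using m1 pm_sub[OF pm] by blast
  have "e1 \<subseteq> V" using EV E1 by blast
  then have pV: "p1 \<in> V" "p2 \<in> V" using d1 by auto
  have E2: "e2 \<in> E" using m2 pm_sub[OF pm] by blast
  have "e2 \<subseteq> V" using EV E2 by blast
  then have pV2: "p3 \<in> V" "p4 \<in> V" using d2 by auto
  have n3: "e3 \<notin> M"
  proof
    assume "e3 \<in> M"
    then have "e3 = e1" using pm_unique[OF pm pV(2)] m1 d1 d3 by blast
    then show False using d1 d3 dist by (auto simp: doubleton_eq_iff)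
  qed
  have n4: "e4 \<notin> M"
  proof
    assume "e4 \<in> M"
    then have "e4 = e1" using pm_unique[OF pm pV(1)] m1 d1 d4 by blast
    then show False using d1 d4 dist by (auto simp: doubleton_eq_iff)
  qed
  obtain S where S: "forcing_set V E M S" "finite S" "card S = forcing_number V E M"
    using fn_wit[OF pm EV fE] by blast
  have SM: "S \<subseteq> M" using S(1) unfolding forcing_set_def by blast
  have hit: "S \<inter> {e1,e2} \<noteq> {}"
  proof
    assume "S \<inter> {e1,e2} = {}"
    then have "S \<subseteq> M'" using SM unfolding M'_def by blast
    then have "M' = M" using S(1) pm' unfolding forcing_set_def by blast
    then show False using n3 unfolding M'_def by blast
  qed
  define S' where "S' = S - {e1,e2} \<union> {e3,e4}"
  have fs': "forcing_set V E M' S'"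
    unfolding forcing_set_def
  proof (intro conjI allI impI)
    show "S' \<subseteq> M'" using SM unfolding S'_def M'_def by blast
    fix M'' assume a: "perfect_matching V E M'' \<and> S' \<subseteq> M''"
    have i3: "e3 \<in> M''" "e4 \<in> M''" using a unfolding S'_def by auto
    have pm3: "perfect_matching V E (M'' - {e3,e4} \<union> {e2,e1})"
    proof (rule swap4[OF _ i3(1) i3(2) d3 d4 d2 d1 E2 E1])
      show "perfect_matching V E M''" using a by blast
      show "distinct [p2, p3, p4, p1]" using dist by auto
    qed
    have "S \<subseteq> M'' - {e3,e4} \<union> {e2,e1}" using a SM n3 n4 unfolding S'_def by blast
    then have eqM: "M'' - {e3,e4} \<union> {e2,e1} = M" using S(1) pm3 unfolding forcing_set_def by blast
    have n1: "e1 \<notin> M''"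
    proof
      assume "e1 \<in> M''"
      then have "e1 = e3" using pm_unique[of V E M'' p2 e1 e3] a i3 pV d1 d3 by blast
      then show False using d1 d3 dist by (auto simp: doubleton_eq_iff)
    qed
    have n2: "e2 \<notin> M''"
    proof
      assume "e2 \<in> M''"
      then have "e2 = e3" using pm_unique[of V E M'' p3 e2 e3] a i3 pV2 d2 d3 by blast
      then show False using d2 d3 dist by (auto simp: doubleton_eq_iff)
    qed
    show "M'' = M'" unfolding M'_def using eqM[symmetric] n1 n2 i3 n3 n4 by blast
  qed
  have "finite S'" using S(2) unfolding S'_def by blast
  then have "forcing_number V E M' \<le> card S'" using fn_le fs' by blast
  also have "card S' \<le> card (S - {e1,e2}) + 2"
  proof -
    have "card {e3,e4} \<le> 2" by (simp add: card_insert_if)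
    then show ?thesis unfolding S'_def using card_Un_le[of "S - {e1,e2}" "{e3,e4}"] by linarith
  qed
  also have "card (S - {e1,e2}) + 1 \<le> card S"
  proof -
    obtain e where "e \<in> S" "e \<in> {e1,e2}" using hit by blast
    then have "card (S - {e1,e2}) \<le> card (S - {e})" using S(2) by (intro card_mono) auto
    moreover have "card (S - {e}) + 1 = card S"
    proof -
      have "card S > 0" using \<open>e \<in> S\<close> S(2) card_gt_0_iff by blast
      then show ?thesis using card_Diff_singleton[OF \<open>e \<in> S\<close>] by simp
    qed
    ultimately show ?thesis by linarith
  qed
  ultimately show ?thesis unfolding M'_def using S(3) by linarith
qed


lemma twist_both:
  assumes pm: "perfect_matching V E M"
    and EV: "\<forall>e\<in>E. e \<noteq> {} \<and> e \<subseteq> V" and fE: "finite E"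
    and m1: "e1 \<in> M" and m2: "e2 \<in> M"
    and d1: "e1 = {p1,p2}" and d2: "e2 = {p3,p4}" and d3: "e3 = {p2,p3}" and d4: "e4 = {p4,p1}"
    and E3: "e3 \<in> E" and E4: "e4 \<in> E"
    and dist: "distinct [p1,p2,p3,p4]"
  shows "perfect_matching V E (M - {e1,e2} \<union> {e3,e4}) \<and>
    forcing_number V E (M - {e1,e2} \<union> {e3,e4}) \<le> forcing_number V E M + 1 \<and>
    forcing_number V E M \<le> forcing_number V E (M - {e1,e2} \<union> {e3,e4}) + 1"
proof (intro conjI)
  define M' where "M' = M - {e1,e2} \<union> {e3,e4}"
  have pm': "perfect_matching V E M'" unfolding M'_def by (rule swap4[OF assms(1,4-12)])
  then show "perfect_matching V E (M - {e1,e2} \<union> {e3,e4})" unfolding M'_def .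
  show "forcing_number V E M' \<le> forcing_number V E M + 1" unfolding M'_def by (rule twist_fn[OF assms])
  have E1: "e1 \<in> E" using m1 pm_sub[OF pm] by blast
  have "e1 \<subseteq> V" using EV E1 by blast
  then have pV: "p1 \<in> V" "p2 \<in> V" using d1 by auto
  have n3: "e3 \<notin> M"
  proof
    assume "e3 \<in> M"
    then have "e3 = e1" using pm_unique[OF pm pV(2)] m1 d1 d3 by blast
    then show False using d1 d3 dist by (auto simp: doubleton_eq_iff)
  qed
  have n4: "e4 \<notin> M"
  proof
    assume "e4 \<in> M"
    then have "e4 = e1" using pm_unique[OF pm pV(1)] m1 d1 d4 by blast
    then show False using d1 d4 dist by (auto simp: doubleton_eq_iff)
  qed
  have E2: "e2 \<in> E" using m2 pm_sub[OF pm] by blast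
  have i3: "e3 \<in> M'" "e4 \<in> M'" unfolding M'_def by auto
  have "forcing_number V E (M' - {e3,e4} \<union> {e2,e1}) \<le> forcing_number V E M' + 1"
  proof (rule twist_fn[OF pm' EV fE i3 d3 d4 d2 d1 E2 E1])
    show "distinct [p2, p3, p4, p1]" using dist by auto
  qed
  moreover have "M' - {e3,e4} \<union> {e2,e1} = M" unfolding M'_def using n3 n4 m1 m2 by blast
  ultimately show "forcing_number V E M \<le> forcing_number V E M' + 1" by simp
qed



locale cyl =
  fixes N k :: nat
  assumes N3: "N \<ge> 3" and Nodd: "odd N" and kodd: "odd k"
begin

definition hor :: "nat \<Rightarrow> nat \<Rightarrow> (nat \<times> nat) set" where
  "hor a b = {(a,b), ((a+1) mod N, b)}"
definition ver :: "nat \<Rightarrow> nat \<Rightarrow> (nat \<times> nat) set" where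
  "ver a b = {(a,b), (a, b+1)}"
definition pr :: "nat \<Rightarrow> nat" where "pr a = (a + N - 1) mod N"
definition sc :: "nat \<Rightarrow> nat" where "sc a = (a + 1) mod N"

lemma hor_sc: "hor a b = {(a,b), (sc a, b)}" unfolding hor_def sc_def by simp

lemma pr_lt: "pr a < N" unfolding pr_def using N3 by simp
lemma sc_lt: "sc a < N" unfolding sc_def using N3 by simp

lemma pr_alt: "a < N \<Longrightarrow> pr a = (if a = 0 then N - 1 else a - 1)"
proof -
  assume a: "a < N"
  show ?thesis
  proof (cases "a = 0")
    case True then show ?thesis unfolding pr_def using N3 by simp
  next
    case False
    then have "a + N - 1 = (a - 1) + N" using N3 by simp
    then have "(a + N - 1) mod N = ((a - 1) + N) mod N" by simp
    also have "\<dots> = a - 1" using a by simp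
    finally show ?thesis unfolding pr_def using False by simp
  qed
qed

lemma sc_alt: "a < N \<Longrightarrow> sc a = (if a + 1 = N then 0 else a + 1)"
  unfolding sc_def by auto

lemma sc_pr: "a < N \<Longrightarrow> sc (pr a) = a"
  using N3 by (auto simp: pr_alt sc_alt pr_lt)

lemma pr_sc: "a < N \<Longrightarrow> pr (sc a) = a"
  using N3 by (auto simp: pr_alt sc_alt sc_lt)

lemma sc_eq_iff: "a < N \<Longrightarrow> c < N \<Longrightarrow> sc c = a \<longleftrightarrow> c = pr a"
  using sc_pr pr_sc pr_lt by metis

lemma sc_eq_iff': "a < N \<Longrightarrow> c < N \<Longrightarrow> a = sc c \<longleftrightarrow> c = pr a"
  using sc_eq_iff by metis

lemma pr_neq: "a < N \<Longrightarrow> pr a \<noteq> a"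
  using N3 by (auto simp: pr_alt)

lemma sc_neq: "a < N \<Longrightarrow> sc a \<noteq> a"
  using N3 by (auto simp: sc_alt)

lemma sc_neq_pr: "a < N \<Longrightarrow> sc a \<noteq> pr a"
  using N3 by (auto simp: sc_alt pr_alt)

lemma EE_iff: "e \<in> cyl_edges k N \<longleftrightarrow>
   (\<exists>a b. a < N \<and> b \<le> k \<and> e = hor a b) \<or> (\<exists>a b. a < N \<and> b < k \<and> e = ver a b)"
  unfolding cyl_edges_def hor_def ver_def by blast

lemma EE_eq: "cyl_edges k N = (\<lambda>(a,b). hor a b) ` ({..<N} \<times> {..k}) \<union> (\<lambda>(a,b). ver a b) ` ({..<N} \<times> {..<k})"
  apply (rule set_eqI)
  apply (simp only: EE_iff)
  apply force
  done

lemma finE: "finite (cyl_edges k N)"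
  unfolding EE_eq by auto

lemma EV: "\<forall>e\<in>cyl_edges k N. e \<noteq> {} \<and> e \<subseteq> cyl_verts k N"
proof
  fix e assume "e \<in> cyl_edges k N"
  then consider (h) a b where "a<N" "b\<le>k" "e = hor a b" | (v) a b where "a<N" "b<k" "e = ver a b"
    unfolding EE_iff by blast
  then show "e \<noteq> {} \<and> e \<subseteq> cyl_verts k N"
  proof cases
    case h then show ?thesis unfolding hor_def cyl_verts_def using N3 by auto
  next
    case v then show ?thesis unfolding ver_def cyl_verts_def by auto
  qed
qed

lemma hor_E: "a < N \<Longrightarrow> b \<le> k \<Longrightarrow> hor a b \<in> cyl_edges k N" unfolding EE_iff by blast
lemma ver_E: "a < N \<Longrightarrow> b < k \<Longrightarrow> ver a b \<in> cyl_edges k N" unfolding EE_iff by blast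

lemma mem_hor: "a < N \<Longrightarrow> c < N \<Longrightarrow> (a,b) \<in> hor c d \<longleftrightarrow> d = b \<and> (c = a \<or> c = pr a)"
  unfolding hor_sc using sc_eq_iff' by auto

lemma mem_ver: "(a,b) \<in> ver c d \<longleftrightarrow> c = a \<and> (d = b \<or> Suc d = b)"
  unfolding ver_def by auto

lemma hor_ne_ver: "hor a b \<noteq> ver c d"
proof
  assume "hor a b = ver c d"
  then have "(c,d) \<in> hor a b" "(c,d+1) \<in> hor a b" unfolding ver_def by auto
  then show False unfolding hor_def by auto
qed

lemma ver_inj: "ver a b = ver c d \<longleftrightarrow> a = c \<and> b = d"
  unfolding ver_def by (auto simp: doubleton_eq_iff)

lemma hor_inj: "a < N \<Longrightarrow> c < N \<Longrightarrow> hor a b = hor c d \<longleftrightarrow> a = c \<and> b = d"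
proof
  assume a: "a < N" "c < N" "hor a b = hor c d"
  have h: "(a,b) \<in> hor a b" by (simp add: hor_def)
  then have "(a,b) \<in> hor c d" unfolding a(3) .
  then have 1: "d = b \<and> (c = a \<or> c = pr a)" using mem_hor a by blast
  have h2: "(c,d) \<in> hor c d" by (simp add: hor_def)
  then have "(c,d) \<in> hor a b" unfolding a(3) .
  then have 2: "a = c \<or> a = pr c" using mem_hor a by blast
  show "a = c \<and> b = d"
  proof (rule ccontr)
    assume "\<not> (a = c \<and> b = d)"
    then have ca: "c = pr a" "a = pr c" using 1 2 by auto
    have "sc a = sc (pr c)" using ca(2) by simp
    also have "\<dots> = c" using sc_pr a(2) by simp
    finally have "sc a = pr a" using ca(1) by simp
    then show False using sc_neq_pr a(1) by blast
  qed
qed simp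

definition X :: "(nat \<times> nat) set set \<Rightarrow> nat \<Rightarrow> nat \<Rightarrow> int" where
  "X M a b = (if hor a b \<in> M then 1 else 0)"
definition Y :: "(nat \<times> nat) set set \<Rightarrow> nat \<Rightarrow> nat \<Rightarrow> int" where
  "Y M a b = (if ver a b \<in> M then 1 else 0)"

abbreviation PM where "PM M \<equiv> perfect_matching (cyl_verts k N) (cyl_edges k N) M"

lemma Y_top: "PM M \<Longrightarrow> Y M a k = 0"
proof -
  assume pm: "PM M"
  have "ver a k \<notin> cyl_edges k N" unfolding EE_iff using hor_ne_ver ver_inj by (metis less_irrefl)
  then show ?thesis using pm_sub[OF pm] unfolding Y_def by auto
qed

lemma vertex_eq:
  assumes pm: "PM M" and a: "a < N" and b: "b \<le> k"
  shows "X M a b + X M (pr a) b + (if b > 0 then Y M a (b - 1) else 0) + Y M a b = 1"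
proof -
  have v: "(a,b) \<in> cyl_verts k N" using a b unfolding cyl_verts_def by simp
  obtain e where e: "e \<in> M" "(a,b) \<in> e" using pm_exists[OF pm v] by blast
  have uq: "e' \<in> M \<longleftrightarrow> e' = e" if "(a,b) \<in> e'" for e'
    using pm_unique[OF pm v] e that by blast
  have h1: "(a,b) \<in> hor a b" by (simp add: hor_def)
  have h2: "(a,b) \<in> hor (pr a) b" using mem_hor a pr_lt by blast
  have v1: "(a,b) \<in> ver a b" by (simp add: ver_def)
  have v2: "b > 0 \<Longrightarrow> (a,b) \<in> ver a (b - 1)" by (simp add: ver_def)
  have X1: "X M a b = (if hor a b = e then 1 else 0)" unfolding X_def using uq[OF h1] by simp
  have X2: "X M (pr a) b = (if hor (pr a) b = e then 1 else 0)" unfolding X_def using uq[OF h2] by simp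
  have Y1: "Y M a b = (if ver a b = e then 1 else 0)" unfolding Y_def using uq[OF v1] by simp
  have Y2: "b > 0 \<Longrightarrow> Y M a (b - 1) = (if ver a (b - 1) = e then 1 else 0)" unfolding Y_def using uq[OF v2] by simp
  have eE: "e \<in> cyl_edges k N" using e pm_sub[OF pm] by blast
  have pa: "pr a < N" "pr a \<noteq> a" using pr_lt pr_neq a by auto
  show ?thesis
  proof (cases "\<exists>c d. c < N \<and> d \<le> k \<and> e = hor c d")
    case True
    then obtain c d where cd: "c < N" "e = hor c d" by blast
    then have "d = b \<and> (c = a \<or> c = pr a)" using mem_hor[OF a cd(1)] e(2) by blast
    then show ?thesis using X1 X2 Y1 Y2 cd hor_ne_ver[symmetric] hor_inj[OF a pa(1)] pa
      by (cases "c = a") (auto simp: hor_inj)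
  next
    case False
    then obtain c d where cd: "e = ver c d" using eE EE_iff by blast
    then have cd2: "c = a \<and> (d = b \<or> Suc d = b)" using mem_ver e(2) by blast
    show ?thesis
    proof (cases "d = b")
      case True
      then show ?thesis using X1 X2 Y1 Y2 cd cd2 hor_ne_ver ver_inj by auto
    next
      case False
      then have "b > 0" "d = b - 1" using cd2 by auto
      then show ?thesis using X1 X2 Y1 Y2 cd cd2 hor_ne_ver ver_inj by auto
    qed
  qed
qed

end


context cyl begin

definition H :: "(nat \<times> nat) set set \<Rightarrow> nat \<Rightarrow> nat \<Rightarrow> int" where
  "H M c b = (\<Sum>i\<le>b. (-1)^i * X M c i)"

lemma H_0: "H M c 0 = X M c 0" unfolding H_def by simp
lemma H_Suc: "H M c (Suc b) = H M c b + (-1)^(Suc b) * X M c (Suc b)"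
  unfolding H_def by simp

lemma Hz:
  assumes pm: "PM M" and a: "a < N"
  shows "b \<le> k \<Longrightarrow> H M a b + H M (pr a) b = (if even b then 1 else 0) - (-1)^b * Y M a b"
proof (induction b)
  case 0
  have "X M a 0 + X M (pr a) 0 + Y M a 0 = 1" using vertex_eq[OF pm a, of 0] by simp
  then show ?case by (simp add: H_0)
next
  case (Suc b)
  have v: "X M a (Suc b) + X M (pr a) (Suc b) + Y M a b + Y M a (Suc b) = 1"
    using vertex_eq[OF pm a Suc.prems] by simp
  have ih: "H M a b + H M (pr a) b = (if even b then 1 else 0) - (-1)^b * Y M a b"
    using Suc by simp
  show ?case
  proof (cases "even b")
    case True
    then show ?thesis using v ih by (simp add: H_Suc algebra_simps)
  next
    case False
    then show ?thesis using v ih by (simp add: H_Suc algebra_simps)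
  qed
qed

lemma H_top:
  assumes pm: "PM M" and a: "a < N"
  shows "H M a k = 0"
proof -
  have rel: "H M c k = - H M (pr c) k" if "c < N" for c
    using Hz[OF pm that, of k] Y_top[OF pm] kodd by simp
  have pw: "c < N \<Longrightarrow> H M c k = (-1)^c * H M 0 k" for c
  proof (induction c)
    case 0 then show ?case by simp
  next
    case (Suc c)
    have "pr (Suc c) = c" using Suc.prems by (simp add: pr_alt)
    then show ?case using rel[OF Suc.prems] Suc by simp
  qed
  have "pr 0 = N - 1" using N3 by (simp add: pr_alt)
  then have "H M 0 k = - H M (N - 1) k" using rel[of 0] N3 by simp
  also have "\<dots> = - ((-1)^(N-1) * H M 0 k)" using pw[of "N - 1"] N3 by simp
  also have "\<dots> = - H M 0 k" using Nodd N3 by simp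
  finally have "H M 0 k = 0" by simp
  then show ?thesis using pw[OF a] by simp
qed

lemma X01: "0 \<le> X M a b" "X M a b \<le> 1" unfolding X_def by auto
lemma Y01: "0 \<le> Y M a b" "Y M a b \<le> 1" unfolding Y_def by auto
lemma X1: "X M a b \<ge> 1 \<Longrightarrow> hor a b \<in> M" unfolding X_def by (auto split: if_splits)
lemma Y1: "Y M a b \<ge> 1 \<Longrightarrow> ver a b \<in> M" unfolding Y_def by (auto split: if_splits)

definition phi :: "int \<Rightarrow> nat \<Rightarrow> int" where
  "phi s b = (if s = -1 then 1 else 0) - (if even b then s else 0)"
definition R :: "(nat \<times> nat) set set \<Rightarrow> nat \<Rightarrow> int \<Rightarrow> nat \<Rightarrow> int" where
  "R M c s b = 4 * (s * H M c b) + phi s b"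

lemma flip_exists:
  assumes pm: "PM M" and c0: "c0 < N" and b0: "b0 < k" and nz: "H M c0 b0 \<noteq> 0"
  shows "\<exists>c s b. c < N \<and> b < k \<and> s * H M c b \<ge> 1 \<and>
     ((s * (-1)^b = 1 \<and> hor c b \<in> M \<and> hor c (Suc b) \<in> M) \<or>
      (s * (-1)^b = -1 \<and> ver c b \<in> M \<and> ver (sc c) b \<in> M))"
proof -
  define F where "F = {..<N} \<times> {1, -1::int} \<times> {..<k}"
  define g where "g = (\<lambda>(c, s, b). R M c s b)"
  have fF: "finite F" unfolding F_def by simp
  define s0 where "s0 = (if H M c0 b0 > 0 then 1 else (-1::int))"
  have f0: "(c0, s0, b0) \<in> F" unfolding F_def s0_def using c0 b0 by auto
  then have neF: "F \<noteq> {}" by blast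
  define m where "m = Max (g ` F)"
  have "m \<in> g ` F" unfolding m_def using fF neF by simp
  then obtain c s b where csb: "(c,s,b) \<in> F" "g (c,s,b) = m" by auto
  have mx: "R M c' s' b' \<le> R M c s b" if "c' < N" "s' = 1 \<or> s' = -1" "b' < k" for c' s' b'
  proof -
    have "(c',s',b') \<in> F" unfolding F_def using that by auto
    then have "g (c',s',b') \<le> m" unfolding m_def using fF by simp
    then show ?thesis using csb unfolding g_def by simp
  qed
  have c: "c < N" and s: "s = 1 \<or> s = -1" and b: "b < k" using csb(1) unfolding F_def by auto
  have "R M c0 s0 b0 \<ge> 3"
    unfolding R_def phi_def s0_def using nz by auto
  moreover have "s0 = 1 \<or> s0 = -1" unfolding s0_def by simp
  ultimately have "R M c s b \<ge> 3" using mx[OF c0 _ b0, of s0] by linarith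
  then have pos: "s * H M c b \<ge> 1" using s unfolding R_def phi_def by (auto split: if_splits)
  have Lr: "H M c b + H M (pr c) b = (if even b then 1 else 0) - (-1)^b * Y M c b"
    using Hz[OF pm c] b by simp
  have Rr: "H M (sc c) b + H M c b = (if even b then 1 else 0) - (-1)^b * Y M (sc c) b"
    using Hz[OF pm sc_lt[of c], of b] b pr_sc[OF c] by simp
  have prc: "pr c < N" "sc c < N" using pr_lt sc_lt by auto
  have X0: "0 \<le> X M a i" "X M a i \<le> 1" "0 \<le> Y M a i" "Y M a i \<le> 1" for a i using X01 Y01 by auto
  show ?thesis
  proof (cases "s = 1")
    case s1: True
    show ?thesis
    proof (cases "even b")
      case True
      have x1: "X M c b \<ge> 1"
      proof (cases b)
        case 0 then show ?thesis using pos s1 by (simp add: H_0)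
      next
        case (Suc b')
        have "R M c 1 b' \<le> R M c s b" using mx[OF c _, of 1 b'] b Suc by simp
        moreover have "H M c b = H M c b' + X M c b" using H_Suc[of M c b'] Suc True by simp
        moreover have "odd b'" using Suc True by simp
        ultimately show ?thesis using s1 True unfolding R_def phi_def by simp
      qed
      have x2: "X M c (Suc b) \<ge> 1"
      proof (cases "Suc b = k")
        case True
        have "H M c (Suc b) = 0" using H_top[OF pm c] True by simp
        then show ?thesis using H_Suc[of M c b] \<open>even b\<close> pos s1 by simp
      next
        case False
        then have "Suc b < k" using b by simp
        then have "R M c 1 (Suc b) \<le> R M c s b" using mx[OF c, of 1 "Suc b"] by simp
        moreover have "H M c (Suc b) = H M c b - X M c (Suc b)" using H_Suc[of M c b] \<open>even b\<close> by simp
        ultimately show ?thesis using s1 \<open>even b\<close> unfolding R_def phi_def by simp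
      qed
      show ?thesis using c b pos s1 True X1[OF x1] X1[OF x2] by (intro exI[of _ c] exI[of _ s] exI[of _ b]) simp
    next
      case False
      have "R M (pr c) (-1) b \<le> R M c s b" using mx[OF prc(1), of "-1" b] b by simp
      then have y1: "Y M c b \<ge> 1" using Lr s1 False unfolding R_def phi_def by simp
      have "R M (sc c) (-1) b \<le> R M c s b" using mx[OF prc(2), of "-1" b] b by simp
      then have y2: "Y M (sc c) b \<ge> 1" using Rr s1 False unfolding R_def phi_def by simp
      show ?thesis using c b pos s1 False Y1[OF y1] Y1[OF y2] by (intro exI[of _ c] exI[of _ s] exI[of _ b]) simp
    qed
  next
    case sm: False
    then have sm1: "s = -1" using s by simp
    show ?thesis
    proof (cases "even b")
      case True
      have "R M (pr c) 1 b \<le> R M c s b" using mx[OF prc(1), of 1 b] b by simp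
      then have y1: "Y M c b \<ge> 1" using Lr sm1 True unfolding R_def phi_def by simp
      have "R M (sc c) 1 b \<le> R M c s b" using mx[OF prc(2), of 1 b] b by simp
      then have y2: "Y M (sc c) b \<ge> 1" using Rr sm1 True unfolding R_def phi_def by simp
      show ?thesis using c b pos sm1 True Y1[OF y1] Y1[OF y2] by (intro exI[of _ c] exI[of _ s] exI[of _ b]) simp
    next
      case False
      then obtain b' where b': "b = Suc b'" by (cases b) auto
      have "R M c (-1) b' \<le> R M c s b" using mx[OF c, of "-1" b'] b b' by simp
      moreover have "H M c b = H M c b' - X M c b" using H_Suc[of M c b'] b' False by simp
      moreover have "even b'" using b' False by simp
      ultimately have x1: "X M c b \<ge> 1" using sm1 False unfolding R_def phi_def by simp
      have "Suc b \<noteq> k" using False kodd by auto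
      then have "Suc b < k" using b by simp
      then have "R M c (-1) (Suc b) \<le> R M c s b" using mx[OF c, of "-1" "Suc b"] by simp
      moreover have "H M c (Suc b) = H M c b + X M c (Suc b)" using H_Suc[of M c b] False by simp
      ultimately have x2: "X M c (Suc b) \<ge> 1" using sm1 False unfolding R_def phi_def by simp
      show ?thesis using c b pos sm1 False X1[OF x1] X1[OF x2] by (intro exI[of _ c] exI[of _ s] exI[of _ b]) simp
    qed
  qed
qed

lemma H_change:
  assumes "\<And>i. X M' d i = X M d i + (if d = c \<and> (i = b \<or> i = Suc b) then \<epsilon> else 0)"
  shows "H M' d j = H M d j + (if d = c \<and> j = b then \<epsilon> * (-1)^b else 0)"
proof (induction j)
  case 0 then show ?case using assms by (simp add: H_0)
next
  case (Suc j)
  then show ?case using assms[of "Suc j"] by (auto simp: H_Suc algebra_simps)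
qed

definition P :: "(nat \<times> nat) set set \<Rightarrow> nat" where
  "P M = (\<Sum>p\<in>{..<N} \<times> {..<k}. nat \<bar>H M (fst p) (snd p)\<bar>)"

lemma P_dec:
  assumes c: "c < N" and b: "b < k" and s: "s = 1 \<or> s = -1" and pos: "s * H M c b \<ge> 1"
    and same: "\<And>d j. d < N \<Longrightarrow> H M' d j = H M d j - (if d = c \<and> j = b then s else 0)"
  shows "P M' < P M"
proof -
  define A where "A = {..<N} \<times> {..<k}"
  define f where "f = (\<lambda>p. nat \<bar>H M (fst p) (snd p)\<bar>)"
  define f' where "f' = (\<lambda>p. nat \<bar>H M' (fst p) (snd p)\<bar>)"
  have fin: "finite A" unfolding A_def by simp
  have p0: "(c,b) \<in> A" unfolding A_def using c b by simp
  have eq: "sum f' (A - {(c,b)}) = sum f (A - {(c,b)})"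
  proof (rule sum.cong)
    fix p assume "p \<in> A - {(c,b)}"
    then show "f' p = f p" unfolding f_def f'_def A_def using same by (cases p) auto
  qed simp
  have lt: "f' (c,b) < f (c,b)" unfolding f_def f'_def using same[OF c, of b] s pos by auto
  have "P M' = sum f' A" unfolding P_def f'_def A_def by simp
  also have "\<dots> = f' (c,b) + sum f' (A - {(c,b)})" using sum.remove[OF fin p0] by blast
  also have "\<dots> < f (c,b) + sum f (A - {(c,b)})" using eq lt by simp
  also have "\<dots> = sum f A" using sum.remove[OF fin p0, of f] by simp
  also have "\<dots> = P M" unfolding P_def f_def A_def by simp
  finally show ?thesis .
qed

lemma P_pos:
  assumes "P M > 0"
  shows "\<exists>c b. c < N \<and> b < k \<and> H M c b \<noteq> 0"
proof (rule ccontr)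
  assume "\<not> ?thesis"
  then have "P M = 0" unfolding P_def by (intro sum.neutral) auto
  then show False using assms by simp
qed

abbreviation fn where "fn M \<equiv> forcing_number (cyl_verts k N) (cyl_edges k N) M"

lemma sgn_cases: "s * (-1)^b = (1::int) \<Longrightarrow> s = 1 \<or> s = -1 \<Longrightarrow> (-1)^b = s"
  by (cases "even b") auto
lemma sgn_cases2: "s * (-1)^b = (-1::int) \<Longrightarrow> s = 1 \<or> s = -1 \<Longrightarrow> (-1)^b = -s"
  by (cases "even b") auto

lemma step:
  assumes pm: "PM M" and P0: "P M > 0"
  shows "\<exists>M'. PM M' \<and> P M' < P M \<and> fn M' \<le> fn M + 1 \<and> fn M \<le> fn M' + 1"
proof -
  obtain c0 b0 where cb0: "c0 < N" "b0 < k" "H M c0 b0 \<noteq> 0" using P_pos[OF P0] by blast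
  obtain c s b where c: "c < N" and b: "b < k" and pos: "s * H M c b \<ge> 1"
    and cases: "(s * (-1)^b = 1 \<and> hor c b \<in> M \<and> hor c (Suc b) \<in> M) \<or>
      (s * (-1)^b = -1 \<and> ver c b \<in> M \<and> ver (sc c) b \<in> M)"
    using flip_exists[OF pm cb0] by blast
  have s: "s = 1 \<or> s = -1"
  proof (rule ccontr)
    assume "\<not> (s = 1 \<or> s = -1)"
    then show False using cases by (cases "even b") auto
  qed
  have scc: "sc c < N" "sc c \<noteq> c" using sc_lt sc_neq c by auto
  have dist: "distinct [(c,b), (sc c, b), (sc c, Suc b), (c, Suc b)]" using scc by auto
  have dist2: "distinct [(c,b), (c, Suc b), (sc c, Suc b), (sc c, b)]" using scc by auto
  from cases show ?thesis
  proof
    assume A: "s * (-1)^b = 1 \<and> hor c b \<in> M \<and> hor c (Suc b) \<in> M"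
    define M' where "M' = M - {hor c b, hor c (Suc b)} \<union> {ver (sc c) b, ver c b}"
    have tw: "PM M' \<and> fn M' \<le> fn M + 1 \<and> fn M \<le> fn M' + 1"
      unfolding M'_def
    proof (rule twist_both[OF pm EV finE _ _ _ _ _ _ _ _ dist])
      show "hor c b \<in> M" "hor c (Suc b) \<in> M" using A by auto
      show "hor c b = {(c, b), (sc c, b)}" by (simp add: hor_sc)
      show "hor c (Suc b) = {(sc c, Suc b), (c, Suc b)}" by (auto simp: hor_sc)
      show "ver (sc c) b = {(sc c, b), (sc c, Suc b)}" by (simp add: ver_def)
      show "ver c b = {(c, Suc b), (c, b)}" by (auto simp: ver_def)
      show "ver (sc c) b \<in> cyl_edges k N" "ver c b \<in> cyl_edges k N" using ver_E scc c b by auto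
    qed
    have Xc: "X M' d i = X M d i + (if d = c \<and> (i = b \<or> i = Suc b) then -1 else 0)" if d: "d < N" for d i
    proof -
      have "hor d i \<in> M' \<longleftrightarrow> hor d i \<in> M \<and> \<not> (d = c \<and> (i = b \<or> i = Suc b))"
        unfolding M'_def using hor_inj[OF d c] hor_ne_ver by auto
      then show ?thesis unfolding X_def using A by auto
    qed
    have Hc: "H M' d j = H M d j - (if d = c \<and> j = b then s else 0)" if "d < N" for d j
      using H_change[OF Xc[OF that], of j] sgn_cases[OF _ s] A by simp
    have "P M' < P M" by (rule P_dec[OF c b s pos Hc])
    then show ?thesis using tw by blast
  next
    assume B: "s * (-1)^b = -1 \<and> ver c b \<in> M \<and> ver (sc c) b \<in> M"
    define M' where "M' = M - {ver c b, ver (sc c) b} \<union> {hor c (Suc b), hor c b}"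
    have tw: "PM M' \<and> fn M' \<le> fn M + 1 \<and> fn M \<le> fn M' + 1"
      unfolding M'_def
    proof (rule twist_both[OF pm EV finE _ _ _ _ _ _ _ _ dist2])
      show "ver c b \<in> M" "ver (sc c) b \<in> M" using B by auto
      show "ver c b = {(c, b), (c, Suc b)}" by (simp add: ver_def)
      show "ver (sc c) b = {(sc c, Suc b), (sc c, b)}" by (auto simp: ver_def)
      show "hor c (Suc b) = {(c, Suc b), (sc c, Suc b)}" by (simp add: hor_sc)
      show "hor c b = {(sc c, b), (c, b)}" by (auto simp: hor_sc)
      show "hor c (Suc b) \<in> cyl_edges k N" "hor c b \<in> cyl_edges k N" using hor_E c b by auto
    qed
    have v1: "(c,b) \<in> cyl_verts k N" "(c, Suc b) \<in> cyl_verts k N" using c b unfolding cyl_verts_def by auto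
    have n1: "hor c b \<notin> M"
    proof
      assume "hor c b \<in> M"
      then have "hor c b = ver c b" using pm_unique[OF pm v1(1)] B by (auto simp: hor_def ver_def)
      then show False using hor_ne_ver by blast
    qed
    have n2: "hor c (Suc b) \<notin> M"
    proof
      assume "hor c (Suc b) \<in> M"
      then have "hor c (Suc b) = ver c b" using pm_unique[OF pm v1(2)] B by (auto simp: hor_def ver_def)
      then show False using hor_ne_ver by blast
    qed
    have Xc: "X M' d i = X M d i + (if d = c \<and> (i = b \<or> i = Suc b) then 1 else 0)" if d: "d < N" for d i
    proof -
      have "hor d i \<in> M' \<longleftrightarrow> hor d i \<in> M \<or> (d = c \<and> (i = b \<or> i = Suc b))"
        unfolding M'_def using hor_inj[OF d c] hor_ne_ver by auto
      then show ?thesis unfolding X_def using n1 n2 by auto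
    qed
    have Hc: "H M' d j = H M d j - (if d = c \<and> j = b then s else 0)" if "d < N" for d j
      using H_change[OF Xc[OF that], of j] sgn_cases2[OF _ s] B by simp
    have "P M' < P M" by (rule P_dec[OF c b s pos Hc])
    then show ?thesis using tw by blast
  qed
qed

lemma P0_X:
  assumes pm: "PM M" and P0: "P M = 0" and c: "c < N" and b: "b \<le> k"
  shows "X M c b = 0"
proof -
  have Hz0: "H M c j = 0" if "j \<le> k" for j
  proof (cases "j = k")
    case True then show ?thesis using H_top[OF pm c] by simp
  next
    case False
    then have "(c,j) \<in> {..<N} \<times> {..<k}" using that c by auto
    then have "nat \<bar>H M c j\<bar> = 0" using P0 unfolding P_def
      using sum_eq_0_iff[of "{..<N} \<times> {..<k}" "\<lambda>p. nat \<bar>H M (fst p) (snd p)\<bar>"] by auto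
    then show ?thesis by simp
  qed
  show ?thesis
  proof (cases b)
    case 0 then show ?thesis using Hz0[of 0] by (simp add: H_0)
  next
    case (Suc b')
    then have "H M c (Suc b') = 0" "H M c b' = 0" using Hz0 b by auto
    then have "(-1)^(Suc b') * X M c (Suc b') = 0" using H_Suc[of M c b'] by simp
    then show ?thesis using Suc by simp
  qed
qed

lemma P0_unique:
  assumes pm1: "PM M1" and pm2: "PM M2" and z1: "P M1 = 0" and z2: "P M2 = 0"
  shows "M1 = M2"
proof -
  have Yeq: "b \<le> k \<Longrightarrow> Y M1 c b = Y M2 c b" if c: "c < N" for c b
  proof (induction b)
    case 0
    then show ?case using vertex_eq[OF pm1 c, of 0] vertex_eq[OF pm2 c, of 0]
        P0_X[OF pm1 z1 c, of 0] P0_X[OF pm2 z2 c, of 0]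
        P0_X[OF pm1 z1 pr_lt[of c], of 0] P0_X[OF pm2 z2 pr_lt[of c], of 0] by simp
  next
    case (Suc b)
    then show ?case using vertex_eq[OF pm1 c Suc.prems] vertex_eq[OF pm2 c Suc.prems]
        P0_X[OF pm1 z1 c Suc.prems] P0_X[OF pm2 z2 c Suc.prems]
        P0_X[OF pm1 z1 pr_lt[of c] Suc.prems] P0_X[OF pm2 z2 pr_lt[of c] Suc.prems] by simp
  qed
  have sub: "Ma \<subseteq> Mb" if pa: "PM Ma" and pb: "PM Mb" and za: "P Ma = 0"
    and Y: "\<And>c b. c < N \<Longrightarrow> b \<le> k \<Longrightarrow> Y Ma c b = Y Mb c b" for Ma Mb
  proof
    fix e assume e: "e \<in> Ma"
    then have "e \<in> cyl_edges k N" using pm_sub[OF pa] by blast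
    then consider (h) a b where "a<N" "b\<le>k" "e = hor a b" | (v) a b where "a<N" "b<k" "e = ver a b"
      unfolding EE_iff by blast
    then show "e \<in> Mb"
    proof cases
      case h
      then have "X Ma a b = 1" using e unfolding X_def by simp
      then show ?thesis using P0_X[OF pa za h(1,2)] by simp
    next
      case v
      then have "Y Ma a b = 1" using e unfolding Y_def by simp
      then have "Y Mb a b = 1" using Y[of a b] v by simp
      then show ?thesis using v unfolding Y_def by (simp split: if_splits)
    qed
  qed
  show ?thesis using sub[OF pm1 pm2 z1] sub[OF pm2 pm1 z2] Yeq by (metis subset_antisym)
qed

lemma reach:
  "PM M \<Longrightarrow> \<exists>Ms. PM Ms \<and> P Ms = 0 \<and>
     (\<forall>x. min (fn M) (fn Ms) \<le> x \<and> x \<le> max (fn M) (fn Ms) \<longrightarrow>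
        x \<in> forcing_spectrum (cyl_verts k N) (cyl_edges k N))"
proof (induction "P M" arbitrary: M rule: less_induct)
  case less
  show ?case
  proof (cases "P M = 0")
    case True
    have "fn M \<in> forcing_spectrum (cyl_verts k N) (cyl_edges k N)"
      unfolding forcing_spectrum_def using less.prems by blast
    then show ?thesis using less.prems True by (intro exI[of _ M]) auto
  next
    case False
    then obtain M' where M': "PM M'" "P M' < P M" "fn M' \<le> fn M + 1" "fn M \<le> fn M' + 1"
      using step[OF less.prems] by blast
    obtain Ms where Ms: "PM Ms" "P Ms = 0"
      "\<forall>x. min (fn M') (fn Ms) \<le> x \<and> x \<le> max (fn M') (fn Ms) \<longrightarrow>
        x \<in> forcing_spectrum (cyl_verts k N) (cyl_edges k N)"
      using less.hyps[OF M'(2) M'(1)] by blast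
    have inM: "fn M \<in> forcing_spectrum (cyl_verts k N) (cyl_edges k N)"
      unfolding forcing_spectrum_def using less.prems by blast
    have "x \<in> forcing_spectrum (cyl_verts k N) (cyl_edges k N)"
      if "min (fn M) (fn Ms) \<le> x \<and> x \<le> max (fn M) (fn Ms)" for x
    proof (cases "x = fn M")
      case True then show ?thesis using inM by simp
    next
      case False
      then have "min (fn M') (fn Ms) \<le> x \<and> x \<le> max (fn M') (fn Ms)"
        using that M'(3,4) by linarith
      then show ?thesis using Ms(3) by blast
    qed
    then show ?thesis using Ms(1,2) by blast
  qed
qed

lemma main: "continuous_spectrum (forcing_spectrum (cyl_verts k N) (cyl_edges k N))"
  unfolding continuous_spectrum_def
proof (intro ballI allI impI)
  fix i j x
  assume i: "i \<in> forcing_spectrum (cyl_verts k N) (cyl_edges k N)"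
    and j: "j \<in> forcing_spectrum (cyl_verts k N) (cyl_edges k N)" and x: "i \<le> x \<and> x \<le> j"
  obtain M1 where M1: "PM M1" "i = fn M1" using i unfolding forcing_spectrum_def by blast
  obtain M2 where M2: "PM M2" "j = fn M2" using j unfolding forcing_spectrum_def by blast
  obtain S1 where S1: "PM S1" "P S1 = 0"
    "\<forall>x. min (fn M1) (fn S1) \<le> x \<and> x \<le> max (fn M1) (fn S1) \<longrightarrow>
        x \<in> forcing_spectrum (cyl_verts k N) (cyl_edges k N)" using reach[OF M1(1)] by blast
  obtain S2 where S2: "PM S2" "P S2 = 0"
    "\<forall>x. min (fn M2) (fn S2) \<le> x \<and> x \<le> max (fn M2) (fn S2) \<longrightarrow>
        x \<in> forcing_spectrum (cyl_verts k N) (cyl_edges k N)" using reach[OF M2(1)] by blast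
  have "S1 = S2" using P0_unique[OF S1(1) S2(1) S1(2) S2(2)] .
  then show "x \<in> forcing_spectrum (cyl_verts k N) (cyl_edges k N)"
  proof (cases "x \<le> fn S1")
    case True
    then show ?thesis using S1(3) x M1(2) by auto
  next
    case False
    then show ?thesis using S2(3) x M2(2) \<open>S1 = S2\<close> by auto
  qed
qed

end

theorem corollary5p5:
  fixes m n :: nat
  assumes "n \<ge> 1" and "m \<ge> 1"
  shows "continuous_spectrum
           (forcing_spectrum (cyl_verts (2*m - 1) (2*n + 1)) (cyl_edges (2*m - 1) (2*n + 1)))"
proof -
  interpret cyl "2*n + 1" "2*m - 1"
    by unfold_locales (use assms in auto)
  show ?thesis by (rule main)
qed

end
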